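(* Let $E$ be a locally convex space. Then every bounded subset of $E$ is either tame, or contains a sequence which is an $l^1$-sequence.
   Context: ${\rm eqc}(E^* )$ is the family of equicontinuous weak-star compact subsets of the dual $E^*$. A sequence of real functions $(f_n)$ on a set $X$ is independent if there are $a<b$ with $\bigcap_{n\in P} f_n^{-1}(-\infty,a)\cap\bigcap_{n\in M} f_n^{-1}(b,\infty)\neq\emptyset$ for all finite disjoint $P,M\subseteq\mathbb N$; a bounded family of real functions is tame if it contains no independent sequence. A bounded $B\subseteq E$ is tame if for every $K\in{\rm eqc}(E^* )$ the family $\{\varphi\mapsto\varphi(b)\}_{b\in B}$ of functions on $K$ is tame. A bounded sequence $(x_n)$ in $E$ is an $l^1$-sequence if there exist a continuous seminorm $\rho$ on $E$ and $\delta>0$ with $\delta\sum_{i=1}^n|c_i|\le\rho(\sum_{i=1}^n c_ix_i)$ for all $n$ and real $c_1,\dots,c_n$. *)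

theory Defs
  imports "HOL-Analysis.Analysis"
begin

definition locally_convex :: "'a::real_vector topology \<Rightarrow> bool" where
  "locally_convex T \<longleftrightarrow>
     topspace T = UNIV \<and>
     continuous_map (prod_topology T T) T (\<lambda>(x, y). x + y) \<and>
     continuous_map (prod_topology euclideanreal T) T (\<lambda>(c, x). c *\<^sub>R x) \<and>
     (\<forall>U. openin T U \<and> 0 \<in> U \<longrightarrow> (\<exists>V. openin T V \<and> convex V \<and> 0 \<in> V \<and> V \<subseteq> U))"

definition tvs_bounded :: "'a::real_vector topology \<Rightarrow> 'a set \<Rightarrow> bool" where
  "tvs_bounded T B \<longleftrightarrow>
     (\<forall>U. openin T U \<and> 0 \<in> U \<longrightarrow> (\<exists>t>0. \<forall>s>t. B \<subseteq> (\<lambda>x. s *\<^sub>R x) ` U))"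

definition seminorm :: "('a::real_vector \<Rightarrow> real) \<Rightarrow> bool" where
  "seminorm p \<longleftrightarrow> (\<forall>x y. p (x + y) \<le> p x + p y) \<and> (\<forall>c x. p (c *\<^sub>R x) = \<bar>c\<bar> * p x)"

definition continuous_seminorm :: "'a::real_vector topology \<Rightarrow> ('a \<Rightarrow> real) \<Rightarrow> bool" where
  "continuous_seminorm T p \<longleftrightarrow> seminorm p \<and> continuous_map T euclideanreal p"

definition tvs_dual :: "'a::real_vector topology \<Rightarrow> ('a \<Rightarrow> real) set" where
  "tvs_dual T = {\<phi>. linear \<phi> \<and> continuous_map T euclideanreal \<phi>}"

definition equicontinuous_set :: "'a::real_vector topology \<Rightarrow> ('a \<Rightarrow> real) set \<Rightarrow> bool" where
  "equicontinuous_set T K \<longleftrightarrow>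
     (\<forall>x\<in>topspace T. \<forall>\<epsilon>>0. \<exists>U. openin T U \<and> x \<in> U \<and>
        (\<forall>\<phi>\<in>K. \<forall>y\<in>U. \<bar>\<phi> y - \<phi> x\<bar> < \<epsilon>))"

text \<open>The weak-star topology on E*
  is the subspace topology of the topology of pointwise convergence, i.e. the product
  topology on ('a => real) (the standard topology of the function type).\<close>
definition eqc :: "'a::real_vector topology \<Rightarrow> ('a \<Rightarrow> real) set set" where
  "eqc T = {K. K \<subseteq> tvs_dual T \<and> equicontinuous_set T K \<and> compact K}"

definition independent_seq :: "'x set \<Rightarrow> (nat \<Rightarrow> 'x \<Rightarrow> real) \<Rightarrow> bool" where
  "independent_seq X f \<longleftrightarrow>
     (\<exists>a b. a < b \<and>
        (\<forall>P M. finite P \<and> finite M \<and> P \<inter> M = {} \<longrightarrow>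
           X \<inter> (\<Inter>n\<in>P. {x. f n x < a}) \<inter> (\<Inter>n\<in>M. {x. b < f n x}) \<noteq> {}))"

definition tame_family :: "'x set \<Rightarrow> ('x \<Rightarrow> real) set \<Rightarrow> bool" where
  "tame_family X F \<longleftrightarrow> \<not> (\<exists>f. range f \<subseteq> F \<and> independent_seq X f)"

definition tame_set :: "'a::real_vector topology \<Rightarrow> 'a set \<Rightarrow> bool" where
  "tame_set T B \<longleftrightarrow> tvs_bounded T B \<and>
     (\<forall>K\<in>eqc T. tame_family K ((\<lambda>b \<phi>. \<phi> b) ` B))"

definition l1_sequence :: "'a::real_vector topology \<Rightarrow> (nat \<Rightarrow> 'a) \<Rightarrow> bool" where
  "l1_sequence T x \<longleftrightarrow> tvs_bounded T (range x) \<and>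
     (\<exists>\<rho> \<delta>. continuous_seminorm T \<rho> \<and> \<delta> > 0 \<and>
        (\<forall>n c. \<delta> * (\<Sum>i<n. \<bar>c i\<bar>) \<le> \<rho> (\<Sum>i<n. c i *\<^sub>R x i)))"

end

theory Submission
  imports Defs
begin

lemma eval_bdd:
  assumes "compact (K :: ('a \<Rightarrow> real) set)"
  shows "bdd_above ((\<lambda>\<phi>. \<bar>\<phi> y\<bar>) ` K)"
proof -
  have "continuous_on K (\<lambda>\<phi>::'a\<Rightarrow>real. \<phi> y)"
    by (rule continuous_on_subset[OF continuous_on_product_coordinates]) simp
  then have "compact ((\<lambda>\<phi>. \<phi> y) ` K)" using assms by (rule compact_continuous_image)
  then have "bounded ((\<lambda>\<phi>. \<phi> y) ` K)" by (rule compact_imp_bounded)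
  then obtain B where B: "\<And>z. z\<in>(\<lambda>\<phi>. \<phi> y) ` K \<Longrightarrow> norm z \<le> B" unfolding bounded_iff by blast
  show ?thesis
  proof (rule bdd_aboveI)
    fix z assume "z \<in> (\<lambda>\<phi>. \<bar>\<phi> y\<bar>) ` K"
    then obtain \<phi> where "\<phi> \<in> K" "z = \<bar>\<phi> y\<bar>" by blast
    then show "z \<le> B" using B[of "\<phi> y"] by simp
  qed
qed

lemma rho_props:
  fixes T :: "'a::real_vector topology"
  assumes K: "K \<in> eqc T" and ne: "K \<noteq> {}" and top: "topspace T = UNIV"
  defines "\<rho> \<equiv> \<lambda>y. SUP \<phi>\<in>K. \<bar>\<phi> y\<bar>"
  shows "continuous_seminorm T \<rho>" and "\<And>\<phi> y. \<phi> \<in> K \<Longrightarrow> \<bar>\<phi> y\<bar> \<le> \<rho> y"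
proof -
  have cpt: "compact K" and sub: "K \<subseteq> tvs_dual T" and eq: "equicontinuous_set T K"
    using K by (auto simp: eqc_def)
  have lin: "\<And>\<phi>. \<phi> \<in> K \<Longrightarrow> linear \<phi>" using sub by (auto simp: tvs_dual_def)
  have bdd: "\<And>y. bdd_above ((\<lambda>\<phi>. \<bar>\<phi> y\<bar>) ` K)" by (rule eval_bdd[OF cpt])
  show le: "\<And>\<phi> y. \<phi> \<in> K \<Longrightarrow> \<bar>\<phi> y\<bar> \<le> \<rho> y"
    unfolding \<rho>_def by (rule cSUP_upper[OF _ bdd])
  have lub: "\<And>y r. (\<And>\<phi>. \<phi> \<in> K \<Longrightarrow> \<bar>\<phi> y\<bar> \<le> r) \<Longrightarrow> \<rho> y \<le> r"
    unfolding \<rho>_def by (rule cSUP_least[OF ne]) auto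
  have add: "\<rho> (x + y) \<le> \<rho> x + \<rho> y" for x y
  proof (rule lub)
    fix \<phi> assume "\<phi> \<in> K"
    then have "\<phi> (x + y) = \<phi> x + \<phi> y" using lin linear_add by blast
    then show "\<bar>\<phi> (x + y)\<bar> \<le> \<rho> x + \<rho> y" using le[OF \<open>\<phi> \<in> K\<close>, of x] le[OF \<open>\<phi> \<in> K\<close>, of y] by linarith
  qed
  have sc: "\<rho> (c *\<^sub>R x) \<le> \<bar>c\<bar> * \<rho> x" for c x
  proof (rule lub)
    fix \<phi> assume "\<phi> \<in> K"
    then have "\<phi> (c *\<^sub>R x) = c * \<phi> x" using lin linear_scale by fastforce
    then show "\<bar>\<phi> (c *\<^sub>R x)\<bar> \<le> \<bar>c\<bar> * \<rho> x"
      using le[OF \<open>\<phi> \<in> K\<close>, of x] by (simp add: abs_mult mult_left_mono)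
  qed
  have nn: "0 \<le> \<rho> x" for x
    using le[of _ x] ne by (meson abs_ge_zero all_not_in_conv order_trans)
  have scale: "\<rho> (c *\<^sub>R x) = \<bar>c\<bar> * \<rho> x" for c x
  proof (cases "c = 0")
    case True
    then show ?thesis using sc[of 0 x] nn[of "0 *\<^sub>R x"] by simp
  next
    case False
    have "\<rho> x = \<rho> (inverse c *\<^sub>R (c *\<^sub>R x))" using False by simp
    also have "\<dots> \<le> \<bar>inverse c\<bar> * \<rho> (c *\<^sub>R x)" by (rule sc)
    finally have "\<bar>c\<bar> * \<rho> x \<le> \<rho> (c *\<^sub>R x)" using False
      by (simp add: field_simps abs_inverse divide_simps split: if_splits)
    then show ?thesis using sc[of c x] by linarith
  qed
  have cont: "continuous_map T euclideanreal \<rho>"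
    unfolding continuous_map_def
  proof (intro conjI allI impI)
    show "\<rho> \<in> topspace T \<rightarrow> topspace euclideanreal" by simp
    fix V :: "real set" assume "openin euclideanreal V"
    then have oV: "open V" by simp
    show "openin T {x \<in> topspace T. \<rho> x \<in> V}"
    proof (subst openin_subopen, intro ballI)
      fix x assume "x \<in> {x \<in> topspace T. \<rho> x \<in> V}"
      then have xt: "x \<in> topspace T" and xv: "\<rho> x \<in> V" by auto
      obtain e where e: "e > 0" "ball (\<rho> x) e \<subseteq> V" using oV xv open_contains_ball by blast
      obtain U where U: "openin T U" "x \<in> U" "\<forall>\<phi>\<in>K. \<forall>y\<in>U. \<bar>\<phi> y - \<phi> x\<bar> < e/2"
        using eq xt e unfolding equicontinuous_set_def by (meson half_gt_zero)
      have "\<rho> y \<in> V" if "y \<in> U" for y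
      proof -
        have "\<rho> y \<le> \<rho> x + e/2"
        proof (rule lub)
          fix \<phi> assume p: "\<phi> \<in> K"
          have "\<bar>\<phi> y - \<phi> x\<bar> < e/2" using U(3) p that by blast
          then show "\<bar>\<phi> y\<bar> \<le> \<rho> x + e/2" using le[OF p, of x] by linarith
        qed
        moreover have "\<rho> x \<le> \<rho> y + e/2"
        proof (rule lub)
          fix \<phi> assume p: "\<phi> \<in> K"
          have "\<bar>\<phi> y - \<phi> x\<bar> < e/2" using U(3) p that by blast
          then show "\<bar>\<phi> x\<bar> \<le> \<rho> y + e/2" using le[OF p, of y] by linarith
        qed
        ultimately have "\<rho> y \<in> ball (\<rho> x) e" using e by (simp add: dist_real_def abs_if)
        then show ?thesis using e by blast
      qed
      then show "\<exists>W. openin T W \<and> x \<in> W \<and> W \<subseteq> {x \<in> topspace T. \<rho> x \<in> V}"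
        using U top by auto
    qed
  qed
  show "continuous_seminorm T \<rho>"
    unfolding continuous_seminorm_def seminorm_def using add scale cont by blast
qed

theorem theorem6p2:
  fixes T :: "'a::real_vector topology" and B :: "'a set"
  assumes "locally_convex T" and "tvs_bounded T B"
  shows "tame_set T B \<or> (\<exists>x. range x \<subseteq> B \<and> l1_sequence T x)"
proof (cases "tame_set T B")
  case True
  then show ?thesis by (rule disjI1)
next
  case False
  then obtain K f where K: "K \<in> eqc T" and rf: "range f \<subseteq> (\<lambda>b \<phi>. \<phi> b) ` B"
    and ind: "independent_seq K f"
    using assms(2) unfolding tame_set_def tame_family_def by blast
  have top: "topspace T = UNIV" using assms(1) by (simp add: locally_convex_def)
  have "\<forall>n. \<exists>b. b \<in> B \<and> f n = (\<lambda>\<phi>. \<phi> b)" using rf by blast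
  from choice[OF this] obtain x where x: "\<forall>n. x n \<in> B \<and> f n = (\<lambda>\<phi>. \<phi> (x n))" by blast
  have xB: "\<And>n. x n \<in> B" and fx: "\<And>n. f n = (\<lambda>\<phi>. \<phi> (x n))" using x by auto
  obtain a b where ab: "a < b" and I0: "\<forall>P M. finite P \<and> finite M \<and> P \<inter> M = {} \<longrightarrow>
      K \<inter> (\<Inter>n\<in>P. {y. f n y < a}) \<inter> (\<Inter>n\<in>M. {y. b < f n y}) \<noteq> {}"
    using ind unfolding independent_seq_def by (elim exE conjE) (rule that)
  have I: "K \<inter> (\<Inter>n\<in>P. {y. f n y < a}) \<inter> (\<Inter>n\<in>M. {y. b < f n y}) \<noteq> {}"
    if "finite P" "finite M" "P \<inter> M = {}" for P M
    by (rule I0[rule_format]) (use that in simp)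
  have ne: "K \<noteq> {}" using I[of "{}" "{}"] by auto
  define \<rho> where "\<rho> \<equiv> \<lambda>y. SUP \<phi>\<in>K. \<bar>\<phi> y\<bar>"
  have cs: "continuous_seminorm T \<rho>" and le: "\<And>\<phi> y. \<phi> \<in> K \<Longrightarrow> \<bar>\<phi> y\<bar> \<le> \<rho> y"
    using rho_props[OF K ne top] unfolding \<rho>_def by auto
  have lin: "\<And>\<phi>. \<phi> \<in> K \<Longrightarrow> linear \<phi>" using K by (auto simp: eqc_def tvs_dual_def)
  have bd: "tvs_bounded T (range x)"
    unfolding tvs_bounded_def
  proof (intro allI impI)
    fix U assume "openin T U \<and> 0 \<in> U"
    then obtain t where "t > 0" "\<forall>s>t. B \<subseteq> (\<lambda>x. s *\<^sub>R x) ` U"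
      using assms(2) unfolding tvs_bounded_def by blast
    moreover have "range x \<subseteq> B" using xB by blast
    ultimately show "\<exists>t>0. \<forall>s>t. range x \<subseteq> (\<lambda>x. s *\<^sub>R x) ` U" by blast
  qed
  have main: "(b - a) / 2 * (\<Sum>i<n. \<bar>c i\<bar>) \<le> \<rho> (\<Sum>i<n. c i *\<^sub>R x i)" for n c
  proof -
    define Pp where "Pp = {i. i < n \<and> c i > 0}"
    define Mm where "Mm = {i. i < n \<and> c i < 0}"
    have fin: "finite Pp" "finite Mm" "Pp \<inter> Mm = {}" "Mm \<inter> Pp = {}"
      unfolding Pp_def Mm_def by auto
    obtain \<phi>1 where p1: "\<phi>1 \<in> K" "\<And>i. i \<in> Mm \<Longrightarrow> \<phi>1 (x i) < a" "\<And>i. i \<in> Pp \<Longrightarrow> b < \<phi>1 (x i)"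
      using I[OF fin(2,1,4)] unfolding fx by blast
    obtain \<phi>2 where p2: "\<phi>2 \<in> K" "\<And>i. i \<in> Pp \<Longrightarrow> \<phi>2 (x i) < a" "\<And>i. i \<in> Mm \<Longrightarrow> b < \<phi>2 (x i)"
      using I[OF fin(1,2,3)] unfolding fx by blast
    have tm: "\<bar>c i\<bar> * (b - a) \<le> c i * (\<phi>1 (x i) - \<phi>2 (x i))" if "i < n" for i
    proof -
      consider "c i > 0" | "c i < 0" | "c i = 0" by linarith
      then show ?thesis
      proof cases
        case 1
        then have "i \<in> Pp" using that Pp_def by simp
        then have "b - a \<le> \<phi>1 (x i) - \<phi>2 (x i)" using p1 p2 by fastforce
        then show ?thesis using 1 by (simp add: mult_left_mono)
      next
        case 2
        then have "i \<in> Mm" using that Mm_def by simp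
        then have "b - a \<le> \<phi>2 (x i) - \<phi>1 (x i)" using p1 p2 by fastforce
        then have "(- c i) * (b - a) \<le> (- c i) * (\<phi>2 (x i) - \<phi>1 (x i))"
          using 2 by (intro mult_left_mono) auto
        then show ?thesis using 2 by (simp add: algebra_simps)
      qed simp
    qed
    have "(\<Sum>i<n. \<bar>c i\<bar>) * (b - a) = (\<Sum>i<n. \<bar>c i\<bar> * (b - a))" by (simp add: sum_distrib_right)
    also have "\<dots> \<le> (\<Sum>i<n. c i * (\<phi>1 (x i) - \<phi>2 (x i)))" by (rule sum_mono) (simp add: tm)
    also have "\<dots> = \<phi>1 (\<Sum>i<n. c i *\<^sub>R x i) - \<phi>2 (\<Sum>i<n. c i *\<^sub>R x i)"
      using lin[OF p1(1)] lin[OF p2(1)]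
      by (simp add: linear_sum linear_scale sum_subtractf right_diff_distrib)
    also have "\<dots> \<le> 2 * \<rho> (\<Sum>i<n. c i *\<^sub>R x i)"
      using le[OF p1(1), of "\<Sum>i<n. c i *\<^sub>R x i"] le[OF p2(1), of "\<Sum>i<n. c i *\<^sub>R x i"] by linarith
    finally show ?thesis by (simp add: field_simps)
  qed
  have "l1_sequence T x"
    unfolding l1_sequence_def using bd cs main ab
    by (intro conjI exI[of _ \<rho>] exI[of _ "(b - a) / 2"]) auto
  then have "\<exists>x. range x \<subseteq> B \<and> l1_sequence T x" using xB by blast
  then show ?thesis by (rule disjI2)
qed

end
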